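(* In the Fock space setting below, let $N\in\mathbb N$, $\alpha_n\in\mathcal B_n(B)$ for $n\in\{0,1,\ldots,N\}$, fix $i\in I$ and let \[ X=\sum_{n=0}^{N-1}\big(V_{i,n}(\alpha_n)+W_{i,n}(\alpha_n)\big),\qquad Y=X+V_{i,N}(\alpha_N)+W_{i,N}(\alpha_N). \] Then for all $b_0,\ldots,b_N\in B$, \[ \mathcal E(b_0Yb_1Y\cdots b_NY)=b_0\,\alpha_N(b_1\alpha_0,b_2\alpha_0,\ldots,b_N\alpha_0)+\mathcal E(b_0Xb_1X\cdots b_NX), \] where $b_j$ acts as $\lambda(b_j)$.
   Context: Let $B$ be a unital complex Banach algebra, $I$ a set, $\mathbb N=\{1,2,\ldots\}$. $D=\ell^1(I,B)$ is the Banach space of functions $d:I\to B$ with $\sum_i\|d(i)\|<\infty$, with left $B$-action $(bd)(i)=b\,d(i)$; $\delta_i\in D$ is $1$ at $i$ and $0$ elsewhere. $\mathcal F=B\Omega\oplus\bigoplus_{k\ge1}D^{\hat\otimes k}\hat\otimes B$ ($\ell^1$-direct sum of projective tensor products), with $B\Omega$ a copy of $B$ and $\Omega$ its unit. $\lambda(b)$: $b_0\Omega\mapsto(bb_0)\Omega$, $d_1\otimes\cdots\otimes d_k\otimes b_0\mapsto(bd_1)\otimes d_2\otimes\cdots\otimes d_k\otimes b_0$. $P:\mathcal F\to B$ is the projection onto $B\Omega$ killing the other summands, $\mathcal E(X)=P(X\Omega)$. $L_i(b_0\Omega)=\delta_i\otimes b_0$, $L_i(d_1\otimes\cdots\otimes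 d_k\otimes b_0)=\delta_i\otimes d_1\otimes\cdots\otimes d_k\otimes b_0$. $\mathcal B_n(B)$ is the set of bounded multilinear maps $B^n\to B$, $\mathcal B_0(B)=B$. For $n\ge1$, $\alpha_n\in\mathcal B_n(B)$: $V_{i,n}(\alpha_n)$ and $W_{i,n}(\alpha_n)$ vanish on $B\Omega$ and on $d_1\otimes\cdots\otimes d_k\otimes b_0$ with $k<n$; for $k=n$ they give $\alpha_n(d_1(i),\ldots,d_n(i))b_0\Omega$ and $\alpha_n(d_1(i),\ldots,d_n(i))\delta_i\otimes b_0$ respectively; for $k>n$ they give $\alpha_n(d_1(i),\ldots,d_n(i))d_{n+1}\otimes\cdots\otimes d_k\otimes b_0$ and $\alpha_n(d_1(i),\ldots,d_n(i))\delta_i\otimes d_{n+1}\otimes\cdots\otimes d_k\otimes b_0$ respectively. For $\alpha_0\in B$: $V_{i,0}(\alpha_0)=\lambda(\alpha_0)$, $W_{i,0}(\alpha_0)=\lambda(\alpha_0)L_i$. *)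

theory Defs
  imports "HOL-Analysis.Analysis"
begin

text \<open>A unital complex Banach algebra is modelled as a type of class real_normed_algebra_1
  and banach together with a map iota from the complex numbers into its centre that extends
  the real scalars, is a unital ring homomorphism and is compatible with the norm;
  complex scalar multiplication c x is then iota c * x.\<close>

definition complex_structure :: "(complex \<Rightarrow> 'b::{real_normed_algebra_1,banach}) \<Rightarrow> bool" where
  "complex_structure \<iota> \<longleftrightarrow>
     (\<forall>r. \<iota> (complex_of_real r) = of_real r) \<and>
     (\<forall>c d. \<iota> (c + d) = \<iota> c + \<iota> d) \<and>
     (\<forall>c d. \<iota> (c * d) = \<iota> c * \<iota> d) \<and>
     (\<forall>c x. \<iota> c * x = x * \<iota> c) \<and>
     (\<forall>c x. norm (\<iota> c * x) = cmod c * norm x)"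

definition bounded_multilinear_n ::
  "(complex \<Rightarrow> 'b::{real_normed_algebra_1,banach}) \<Rightarrow> nat \<Rightarrow> ('b list \<Rightarrow> 'b) \<Rightarrow> bool" where
  "bounded_multilinear_n \<iota> n f \<longleftrightarrow>
     (\<forall>xs ys x y. length xs + length ys + 1 = n \<longrightarrow>
        f (xs @ (x + y) # ys) = f (xs @ x # ys) + f (xs @ y # ys)) \<and>
     (\<forall>xs ys x c. length xs + length ys + 1 = n \<longrightarrow>
        f (xs @ (\<iota> c * x) # ys) = \<iota> c * f (xs @ x # ys)) \<and>
     (\<exists>K. \<forall>xs. length xs = n \<longrightarrow> norm (f xs) \<le> K * prod_list (map norm xs))"

text \<open>An elementary tensor d_1 (x) ... (x) d_k (x) b_0 is the pair (ds, b_0) with ds = [d_1,...,d_k];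
  the pair ([], b_0) is b_0 Omega.  Elements d of D are functions I to B.
  A vector is a finite formal sum of elementary tensors (a list).
  Operators are given on elementary tensors and extended additively.\<close>

type_synonym ('i,'b) etensor = "('i \<Rightarrow> 'b) list \<times> 'b"
type_synonym ('i,'b) fock = "('i,'b) etensor list"

definition delta :: "'i \<Rightarrow> 'i \<Rightarrow> 'b::{real_normed_algebra_1,banach}" where
  "delta i = (\<lambda>j. if j = i then 1 else 0)"

definition Omega :: "('i,'b::{real_normed_algebra_1,banach}) fock" where
  "Omega = [([], 1)]"

definition ext_op :: "(('i,'b) etensor \<Rightarrow> ('i,'b) fock) \<Rightarrow> ('i,'b) fock \<Rightarrow> ('i,'b) fock" where
  "ext_op f v = concat (map f v)"

definition lam_e :: "'b::{real_normed_algebra_1,banach} \<Rightarrow> ('i,'b) etensor \<Rightarrow> ('i,'b) fock" where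
  "lam_e b t = (case t of
      ([], b0) \<Rightarrow> [([], b * b0)]
    | (d # ds, b0) \<Rightarrow> [((\<lambda>j. b * d j) # ds, b0)])"

definition L_e :: "'i \<Rightarrow> ('i,'b::{real_normed_algebra_1,banach}) etensor \<Rightarrow> ('i,'b) fock" where
  "L_e i t = [(delta i # fst t, snd t)]"

definition V_e :: "'i \<Rightarrow> nat \<Rightarrow> ('b list \<Rightarrow> 'b) \<Rightarrow> ('i,'b::{real_normed_algebra_1,banach}) etensor
    \<Rightarrow> ('i,'b) fock" where
  "V_e i n \<alpha> t =
    (if n = 0 then lam_e (\<alpha> []) t
     else (let ds = fst t; b0 = snd t; a = \<alpha> (map (\<lambda>d. d i) (take n ds)) in
       if length ds < n then []
       else if length ds = n then [([], a * b0)]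
       else [((\<lambda>j. a * (ds ! n) j) # drop (Suc n) ds, b0)]))"

definition W_e :: "'i \<Rightarrow> nat \<Rightarrow> ('b list \<Rightarrow> 'b) \<Rightarrow> ('i,'b::{real_normed_algebra_1,banach}) etensor
    \<Rightarrow> ('i,'b) fock" where
  "W_e i n \<alpha> t =
    (if n = 0 then ext_op (lam_e (\<alpha> [])) (L_e i t)
     else (let ds = fst t; b0 = snd t; a = \<alpha> (map (\<lambda>d. d i) (take n ds)) in
       if length ds < n then []
       else if length ds = n then [([(\<lambda>j. a * delta i j)], b0)]
       else [((\<lambda>j. a * delta i j) # drop n ds, b0)]))"

definition VW_sum_e :: "(nat \<Rightarrow> 'b list \<Rightarrow> 'b) \<Rightarrow> 'i \<Rightarrow> nat \<Rightarrow> ('i,'b::{real_normed_algebra_1,banach}) etensor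
    \<Rightarrow> ('i,'b) fock" where
  "VW_sum_e \<alpha> i M t = concat (map (\<lambda>n. V_e i n (\<alpha> n) t @ W_e i n (\<alpha> n) t) [0..<M])"

definition Pproj :: "('i,'b::{real_normed_algebra_1,banach}) fock \<Rightarrow> 'b" where
  "Pproj v = sum_list (map snd (filter (\<lambda>t. fst t = []) v))"

text \<open>The word b_0 Z b_1 Z ... b_N Z applied to a vector, Z given on elementary tensors.\<close>

definition word_apply :: "(('i,'b) etensor \<Rightarrow> ('i,'b) fock) \<Rightarrow> (nat \<Rightarrow> 'b::{real_normed_algebra_1,banach})
    \<Rightarrow> nat \<Rightarrow> ('i,'b) fock \<Rightarrow> ('i,'b) fock" where
  "word_apply Z b N = foldr (\<lambda>j acc. ext_op (lam_e (b j)) \<circ> ext_op Z \<circ> acc) [0..<Suc N] id"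

text \<open>E(b_0 Z b_1 Z ... b_N Z) = P(b_0 Z ... b_N Z Omega).\<close>

definition E_word :: "(('i,'b) etensor \<Rightarrow> ('i,'b) fock) \<Rightarrow> (nat \<Rightarrow> 'b::{real_normed_algebra_1,banach})
    \<Rightarrow> nat \<Rightarrow> 'b" where
  "E_word Z b N = Pproj (word_apply Z b N Omega)"

end

theory Submission
  imports Defs
begin

lemma ext_op_append[simp]: "ext_op f (v @ w) = ext_op f v @ ext_op f w"
  by (simp add: ext_op_def)

lemma ext_op_Cons[simp]: "ext_op f (t # w) = f t @ ext_op f w"
  by (simp add: ext_op_def)

lemma ext_op_Nil[simp]: "ext_op f [] = []"
  by (simp add: ext_op_def)

lemma Pproj_append[simp]: "Pproj (v @ w) = Pproj v + Pproj w"
  by (simp add: Pproj_def)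

lemma Pproj_ext_op: "Pproj (ext_op f v) = sum_list (map (\<lambda>t. Pproj (f t)) v)"
  by (induction v) (auto simp: Pproj_def)

lemma ext_op_ext_op: "ext_op f (ext_op g v) = ext_op (\<lambda>t. ext_op f (g t)) v"
  by (induction v) auto

lemma lam_e_single: "\<exists>s. lam_e c t = [s] \<and> length (fst s) = length (fst t)"
  by (cases t; cases "fst t") (auto simp: lam_e_def)

lemma lam_len: "s \<in> set (lam_e c t) \<Longrightarrow> length (fst s) = length (fst t)"
  using lam_e_single[of c t] by auto

lemma V_len: "s \<in> set (V_e i n a t) \<Longrightarrow> length (fst s) \<le> length (fst t)"
  by (cases "n = 0") (auto simp: V_e_def Let_def lam_len split: if_splits)

lemma W_len: "s \<in> set (W_e i n a t) \<Longrightarrow> length (fst s) \<le> Suc (length (fst t))"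
  by (cases "n = 0") (auto simp: W_e_def Let_def L_e_def lam_len split: if_splits)

lemma W_len_pos: "n > 0 \<Longrightarrow> s \<in> set (W_e i n a t) \<Longrightarrow> length (fst s) \<le> length (fst t)"
  by (auto simp: W_e_def Let_def split: if_splits)

lemma VW_len: "s \<in> set (VW_sum_e \<alpha> i M t) \<Longrightarrow> length (fst s) \<le> Suc (length (fst t))"
  by (auto simp: VW_sum_e_def dest!: V_len W_len)

lemma filter_concat_map: "filter P (concat (map f v)) = concat (map (\<lambda>t. filter P (f t)) v)"
  by (induction v) auto

lemma VW_filter:
  assumes "M \<ge> 1"
  shows "filter (\<lambda>s. length (fst s) = Suc (length (fst t))) (VW_sum_e \<alpha> i M t)
         = [((\<lambda>j. \<alpha> 0 [] * delta i j) # fst t, snd t)]"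
proof -
  have M: "[0..<M] = 0 # [1..<M]" using assms upt_conv_Cons by auto
  have r: "filter (\<lambda>s. length (fst s) = Suc (length (fst t))) (V_e i n (\<alpha> n) t @ W_e i n (\<alpha> n) t) = []"
    if "n \<in> set [1..<M]" for n
  proof -
    have "n > 0" using that by auto
    then show ?thesis
      by (auto simp: filter_empty_conv dest!: V_len W_len_pos[OF \<open>n>0\<close>])
  qed
  have r0: "filter (\<lambda>s. length (fst s) = Suc (length (fst t))) (V_e i 0 (\<alpha> 0) t) = []"
    by (auto simp: filter_empty_conv dest!: V_len)
  have w0: "W_e i 0 (\<alpha> 0) t = [((\<lambda>j. \<alpha> 0 [] * delta i j) # fst t, snd t)]"
    by (simp add: W_e_def L_e_def lam_e_def)
  have "filter (\<lambda>s. length (fst s) = Suc (length (fst t)))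
      (concat (map (\<lambda>n. V_e i n (\<alpha> n) t @ W_e i n (\<alpha> n) t) [1..<M])) = []"
    unfolding filter_concat_map using r by (induction "[1..<M]") auto
  then show ?thesis
    unfolding VW_sum_e_def M using r0 w0 by simp
qed

lemma filter_lam:
  "filter (\<lambda>s. length (fst s) = m) (ext_op (lam_e c) w) = ext_op (lam_e c) (filter (\<lambda>s. length (fst s) = m) w)"
proof (induction w)
  case (Cons t w)
  obtain s where "lam_e c t = [s]" "length (fst s) = length (fst t)" using lam_e_single by blast
  then show ?case using Cons by simp
qed simp

lemma sum_list_filter:
  "(\<forall>t\<in>set v. \<not> P t \<longrightarrow> f t = (0::'a::comm_monoid_add)) \<Longrightarrow> sum_list (map f v) = sum_list (map f (filter P v))"
  by (induction v) auto

lemma concat_filter: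
  "(\<forall>t\<in>set v. \<not> P t \<longrightarrow> f t = []) \<Longrightarrow> concat (map f v) = concat (map f (filter P v))"
  by (induction v) auto

lemma VW_short:
  assumes "N \<ge> 1" "length (fst t) < N"
  shows "VW_sum_e \<alpha> i (Suc N) t = VW_sum_e \<alpha> i N t"
  using assms by (simp add: VW_sum_e_def V_e_def W_e_def Let_def)

lemma VW_split:
  "VW_sum_e \<alpha> i (Suc N) t = VW_sum_e \<alpha> i N t @ (V_e i N (\<alpha> N) t @ W_e i N (\<alpha> N) t)"
  by (simp add: VW_sum_e_def)

lemma foldr_comp: "foldr (\<lambda>j acc. h j \<circ> acc) xs id v = foldr h xs v"
  by (induction xs arbitrary: v) auto

definition gstep where "gstep Z b j v = ext_op (lam_e (b j)) (ext_op Z v)"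

lemma word_apply_foldr: "word_apply Z b N v = foldr (gstep Z b) [0..<Suc N] v"
proof -
  have e: "(\<lambda>j acc. ext_op (lam_e (b j)) \<circ> ext_op Z \<circ> acc) = (\<lambda>j acc. gstep Z b j \<circ> acc)"
    by (auto simp: fun_eq_iff gstep_def)
  show ?thesis unfolding word_apply_def e foldr_comp ..
qed

lemma invariant:
  fixes \<alpha> :: "nat \<Rightarrow> 'b::{real_normed_algebra_1,banach} list \<Rightarrow> 'b"
  assumes N: "N \<ge> 1"
  shows "k \<le> N \<Longrightarrow>
    foldr (gstep (VW_sum_e \<alpha> i (Suc N)) b) [N+1-k..<N+1] Omega
      = foldr (gstep (VW_sum_e \<alpha> i N) b) [N+1-k..<N+1] Omega
    \<and> (\<forall>s\<in>set (foldr (gstep (VW_sum_e \<alpha> i N) b) [N+1-k..<N+1] Omega). length (fst s) \<le> k)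
    \<and> filter (\<lambda>s. length (fst s) = k) (foldr (gstep (VW_sum_e \<alpha> i N) b) [N+1-k..<N+1] Omega)
       = [(map (\<lambda>j x. b j * (\<alpha> 0 [] * delta i x)) [N+1-k..<N+1], 1)]"
proof (induction k)
  case 0
  then show ?case by (simp add: Omega_def)
next
  case (Suc k)
  let ?X = "VW_sum_e \<alpha> i N"
  let ?Y = "VW_sum_e \<alpha> i (Suc N)"
  define v where "v = foldr (gstep ?X b) [N+1-k..<N+1] Omega"
  have IH: "foldr (gstep ?Y b) [N+1-k..<N+1] Omega = v"
     "\<forall>s\<in>set v. length (fst s) \<le> k"
     "filter (\<lambda>s. length (fst s) = k) v = [(map (\<lambda>j x. b j * (\<alpha> 0 [] * delta i x)) [N+1-k..<N+1], 1)]"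
    using Suc by (auto simp: v_def)
  have U: "[N+1-Suc k..<N+1] = (N-k) # [N+1-k..<N+1]"
  proof -
    have a: "N+1-Suc k = N-k" "N+1-k = Suc (N-k)" using Suc.prems by arith+
    show ?thesis unfolding a by (rule upt_conv_Cons) simp
  qed
  have fX: "foldr (gstep ?X b) [N+1-Suc k..<N+1] Omega = gstep ?X b (N-k) v"
    unfolding U v_def by simp
  have eq: "ext_op ?Y v = ext_op ?X v"
    unfolding ext_op_def
    apply (rule arg_cong[where f=concat])
    apply (rule map_cong[OF refl])
    apply (rule VW_short[OF N])
    using IH(2) Suc.prems by fastforce
  have A: "foldr (gstep ?Y b) [N+1-Suc k..<N+1] Omega = gstep ?X b (N-k) v"
    unfolding U using IH(1) eq by (simp add: gstep_def)
  have B: "\<forall>s\<in>set (gstep ?X b (N-k) v). length (fst s) \<le> Suc k"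
    using IH(2) by (fastforce simp: gstep_def ext_op_def dest!: lam_len VW_len)
  have "filter (\<lambda>s. length (fst s) = Suc k) (ext_op ?X v)
      = concat (map (\<lambda>t. filter (\<lambda>s. length (fst s) = Suc k) (?X t)) v)"
    unfolding ext_op_def filter_concat_map by simp
  also have "\<dots> = concat (map (\<lambda>t. filter (\<lambda>s. length (fst s) = Suc k) (?X t)) (filter (\<lambda>s. length (fst s) = k) v))"
    apply (rule concat_filter)
    using IH(2) by (force simp: filter_empty_conv dest!: VW_len)
  also have "\<dots> = concat (map (\<lambda>t. [((\<lambda>j. \<alpha> 0 [] * delta i j) # fst t, snd t)]) (filter (\<lambda>s. length (fst s) = k) v))"
    apply (rule arg_cong[where f=concat])
    apply (rule map_cong[OF refl])
    using VW_filter[OF N] by force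
  also have "\<dots> = [((\<lambda>j. \<alpha> 0 [] * delta i j) # map (\<lambda>j x. b j * (\<alpha> 0 [] * delta i x)) [N+1-k..<N+1], 1)]"
    using IH(3) by simp
  finally have F: "filter (\<lambda>s. length (fst s) = Suc k) (ext_op ?X v) = \<dots>" .
  have C: "filter (\<lambda>s. length (fst s) = Suc k) (gstep ?X b (N-k) v)
      = [(map (\<lambda>j x. b j * (\<alpha> 0 [] * delta i x)) [N+1-Suc k..<N+1], 1)]"
    unfolding gstep_def filter_lam F U by (simp add: lam_e_def)
  show ?case using A B C fX by simp
qed

theorem mainTheorem8:
  fixes \<iota> :: "complex \<Rightarrow> 'b::{real_normed_algebra_1,banach}"
    and \<alpha> :: "nat \<Rightarrow> 'b list \<Rightarrow> 'b"
    and i :: 'i and N :: nat and b :: "nat \<Rightarrow> 'b"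
  assumes "complex_structure \<iota>"
    and "N \<ge> 1"
    and "\<forall>n\<in>{1..N}. bounded_multilinear_n \<iota> n (\<alpha> n)"
  shows "E_word (VW_sum_e \<alpha> i (Suc N)) b N
           = b 0 * \<alpha> N (map (\<lambda>j. b j * \<alpha> 0 []) [1..<Suc N]) + E_word (VW_sum_e \<alpha> i N) b N"
proof -
  let ?X = "VW_sum_e \<alpha> i N"
  let ?Y = "VW_sum_e \<alpha> i (Suc N)"
  let ?ds = "map (\<lambda>j x. b j * (\<alpha> 0 [] * delta i x)) [1..<N+1]"
  define v where "v = foldr (gstep ?X b) [1..<N+1] Omega"
  have I: "foldr (gstep ?Y b) [1..<N+1] Omega = v"
     "\<forall>s\<in>set v. length (fst s) \<le> N"
     "filter (\<lambda>s. length (fst s) = N) v = [(?ds, 1)]"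
    using invariant[OF assms(2), of N \<alpha> i b] by (auto simp: v_def)
  have U: "[0..<Suc N] = 0 # [1..<N+1]" using upt_conv_Cons by auto
  have EY: "E_word ?Y b N = Pproj (gstep ?Y b 0 v)"
    unfolding E_word_def word_apply_foldr U using I(1) by simp
  have EX: "E_word ?X b N = Pproj (gstep ?X b 0 v)"
    unfolding E_word_def word_apply_foldr U v_def by simp
  define Bf where "Bf t = Pproj (ext_op (lam_e (b 0)) (V_e i N (\<alpha> N) t @ W_e i N (\<alpha> N) t))" for t
  have "Pproj (gstep ?Y b 0 v) = sum_list (map (\<lambda>t. Pproj (ext_op (lam_e (b 0)) (?X t)) + Bf t) v)"
    unfolding gstep_def ext_op_ext_op Pproj_ext_op Bf_def
    by (simp add: VW_split Pproj_ext_op)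
  also have "\<dots> = Pproj (gstep ?X b 0 v) + sum_list (map Bf v)"
    unfolding gstep_def ext_op_ext_op Pproj_ext_op sum_list_addf by simp
  also have "sum_list (map Bf v) = sum_list (map Bf (filter (\<lambda>s. length (fst s) = N) v))"
    apply (rule sum_list_filter)
    using I(2) assms(2) by (auto simp: Bf_def V_e_def W_e_def Let_def Pproj_def)
  also have "\<dots> = Bf (?ds, 1)" using I(3) by simp
  also have "\<dots> = b 0 * \<alpha> N (map (\<lambda>j. b j * \<alpha> 0 []) [1..<Suc N])"
    using assms(2) by (simp add: Bf_def V_e_def W_e_def Let_def Pproj_def lam_e_def delta_def comp_def)
  finally show ?thesis using EY EX by (simp add: add.commute)
qed

end
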